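(* Let $\mathbb{R}^m$ be endowed with a norm $\|\cdot\|$. Let $\bar A\in\mathbb{R}^{(m+1)\times n}$ have at least two different columns and let $v\in\mathbb{R}^m$. Suppose $\bar u\in F(v)$ and $x\in\Delta_{n-1}$ satisfy $\bar Ax\ne\bar u$. Then for $d:=\frac{\bar Ax-\bar u}{\|\bar Ax-\bar u\|_v}$, \[ \Phi_v(\bar A)\le\max\{\lambda:\ \exists\, y,z\in\Delta_{n-1},\ I(y)\subseteq I(x),\ \bar A(y-z)=\lambda d\}. \]
   Context: $\Delta_{n-1}=\{x\in\mathbb{R}^n_+:\sum_ix_i=1\}$; for $x\in\Delta_{n-1}$, $I(x)=\{i: x_i>0\}$. A matrix is identified with the set of its columns; $\mathrm{conv}(\bar A)=\{\bar Ax:x\in\Delta_{n-1}\}$. For $\bar w=(w,w_{m+1})\in\mathbb{R}^{m+1}$, $\|\bar w\|_v=\sqrt{\|w\|^2+|\langle v,w\rangle+w_{m+1}|}$; for nonempty $F,G\subseteq\mathbb{R}^{m+1}$, $\mathrm{dist}_v(F,G)=\min_{\bar w\in F,\bar w'\in G}\|\bar w-\bar w'\|_v$. $F(v)=\operatorname{Argmin}_{\bar w\in\mathrm{conv}(\bar A)}\langle(v,1),\bar w\rangle$, a face of $\mathrm{conv}(\bar A)$. The local facial distance is $\Phi_v(\bar A)=\min\{\mathrm{dist}_v(G,\mathrm{conv}(\bar A\setminus G)):G\text{ a face of }F(v),\ \emptyset\ne G\ne\mathrm{conv}(\bar A)\}$, where $\bar A\setminus G$ denotes the columns of $\bar A$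 not in $G$. *)

theory Defs
  imports "HOL-Analysis.Analysis"
begin

definition is_norm_fun :: "(real^'m \<Rightarrow> real) \<Rightarrow> bool" where
  "is_norm_fun N \<longleftrightarrow>
     (\<forall>x. 0 \<le> N x) \<and> (\<forall>x. N x = 0 \<longleftrightarrow> x = 0) \<and>
     (\<forall>c x. N (c *\<^sub>R x) = \<bar>c\<bar> * N x) \<and> (\<forall>x y. N (x + y) \<le> N x + N y)"

definition std_simplex :: "('n::finite \<Rightarrow> real) set" where
  "std_simplex = {x. (\<forall>i. 0 \<le> x i) \<and> sum x UNIV = 1}"

definition supp_idx :: "('n \<Rightarrow> real) \<Rightarrow> 'n set" where
  "supp_idx x = {i. 0 < x i}"

text \<open>A matrix of size (m+1) x n is represented by its columns A i :: (real^'m) \<times> real.\<close>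
definition matvec :: "('n::finite \<Rightarrow> (real^'m) \<times> real) \<Rightarrow> ('n \<Rightarrow> real) \<Rightarrow> (real^'m) \<times> real" where
  "matvec A x = (\<Sum>i\<in>UNIV. x i *\<^sub>R A i)"

definition convA :: "('n::finite \<Rightarrow> (real^'m) \<times> real) \<Rightarrow> ((real^'m) \<times> real) set" where
  "convA A = {matvec A x | x. x \<in> std_simplex}"

definition normv :: "(real^'m \<Rightarrow> real) \<Rightarrow> real^'m \<Rightarrow> (real^'m) \<times> real \<Rightarrow> real" where
  "normv N v w = sqrt ((N (fst w))\<^sup>2 + \<bar>v \<bullet> fst w + snd w\<bar>)"

text \<open>dist_v(F,G): the minimum (attained for the compact sets used here) of the v-norm distance.\<close>
definition distv :: "(real^'m \<Rightarrow> real) \<Rightarrow> real^'m \<Rightarrow> ((real^'m) \<times> real) set \<Rightarrow> ((real^'m) \<times> real) set \<Rightarrow> real" where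
  "distv N v F G = Inf {normv N v (w - w') | w w'. w \<in> F \<and> w' \<in> G}"

definition Fv :: "('n::finite \<Rightarrow> (real^'m) \<times> real) \<Rightarrow> real^'m \<Rightarrow> ((real^'m) \<times> real) set" where
  "Fv A v = {w \<in> convA A. \<forall>w' \<in> convA A. v \<bullet> fst w + snd w \<le> v \<bullet> fst w' + snd w'}"

definition Phi :: "(real^'m \<Rightarrow> real) \<Rightarrow> real^'m \<Rightarrow> ('n::finite \<Rightarrow> (real^'m) \<times> real) \<Rightarrow> real" where
  "Phi N v A = Inf {distv N v G (convex hull {A i | i. A i \<notin> G}) | G.
                     G face_of Fv A v \<and> G \<noteq> {} \<and> G \<noteq> convA A}"

end

theory Submission
  imports Defs
begin


lemma matvec_supp:
  fixes A :: "'n::finite \<Rightarrow> (real^'m) \<times> real"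
  assumes "y \<in> std_simplex" "supp_idx y \<subseteq> T"
  shows "matvec A y = (\<Sum>j\<in>T. y j *\<^sub>R A j)" and "sum y T = 1"
proof -
  have z: "y j = 0" if "j \<notin> T" for j
  proof -
    have "y j \<ge> 0" using assms(1) by (simp add: std_simplex_def)
    moreover have "\<not> 0 < y j" using assms(2) that by (auto simp: supp_idx_def)
    ultimately show ?thesis by simp
  qed
  show "matvec A y = (\<Sum>j\<in>T. y j *\<^sub>R A j)"
    unfolding matvec_def by (rule sum.mono_neutral_right) (auto simp: z)
  have "sum y UNIV = 1" using assms by (simp add: std_simplex_def)
  moreover have "sum y UNIV = sum y T"
    by (rule sum.mono_neutral_right) (auto simp: z)
  ultimately show "sum y T = 1" by simp
qed

lemma qset_sub_hull:
  fixes A :: "'n::finite \<Rightarrow> (real^'m) \<times> real"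
  assumes "y \<in> std_simplex" "supp_idx y \<subseteq> T"
  shows "matvec A y \<in> convex hull (A ` T)"
proof -
  have "(\<Sum>j\<in>T. y j *\<^sub>R A j) \<in> convex hull (A ` T)"
    apply (rule convex_sum)
    using matvec_supp[OF assms] assms by (auto simp: std_simplex_def hull_inc)
  moreover have "matvec A y = (\<Sum>j\<in>T. y j *\<^sub>R A j)" by (rule matvec_supp(1)[OF assms])
  ultimately show ?thesis by simp
qed

lemma qset_convex:
  fixes A :: "'n::finite \<Rightarrow> (real^'m) \<times> real"
  shows "convex {matvec A y | y. y \<in> std_simplex \<and> supp_idx y \<subseteq> T}"
proof (rule convexI)
  fix p1 p2 and a b :: real
  assume "p1 \<in> {matvec A y | y. y \<in> std_simplex \<and> supp_idx y \<subseteq> T}"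
     "p2 \<in> {matvec A y | y. y \<in> std_simplex \<and> supp_idx y \<subseteq> T}"
     and ab: "0 \<le> a" "0 \<le> b" "a + b = 1"
  then obtain y1 y2 where h: "y1 \<in> std_simplex" "supp_idx y1 \<subseteq> T" "y2 \<in> std_simplex" "supp_idx y2 \<subseteq> T"
     "0 \<le> a" "0 \<le> b" "a + b = 1" "p1 = matvec A y1" "p2 = matvec A y2" by blast
  define y where "y = (\<lambda>j. a * y1 j + b * y2 j)"
  have "y \<in> std_simplex" using h
    by (auto simp: y_def std_simplex_def sum.distrib sum_distrib_left[symmetric])
  moreover have "supp_idx y \<subseteq> T"
  proof
    fix j assume "j \<in> supp_idx y"
    then have pos: "0 < a * y1 j + b * y2 j" by (simp add: supp_idx_def y_def)
    have nn: "y1 j \<ge> 0" "y2 j \<ge> 0" using h by (auto simp: std_simplex_def)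
    have "0 < y1 j \<or> 0 < y2 j"
    proof (rule ccontr)
      assume "\<not> (0 < y1 j \<or> 0 < y2 j)"
      then have "y1 j = 0" "y2 j = 0" using nn by auto
      then show False using pos by simp
    qed
    then show "j \<in> T" using h by (auto simp: supp_idx_def)
  qed
  moreover have "matvec A y = a *\<^sub>R matvec A y1 + b *\<^sub>R matvec A y2"
    by (simp add: matvec_def y_def scaleR_add_left sum.distrib scaleR_sum_right)
  ultimately show "a *\<^sub>R p1 + b *\<^sub>R p2 \<in> {matvec A y | y. y \<in> std_simplex \<and> supp_idx y \<subseteq> T}"
    using h by force
qed

lemma qset_eq:
  fixes A :: "'n::finite \<Rightarrow> (real^'m) \<times> real"
  shows "{matvec A y | y. y \<in> std_simplex \<and> supp_idx y \<subseteq> T} = convex hull (A ` T)"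
proof
  show "{matvec A y | y. y \<in> std_simplex \<and> supp_idx y \<subseteq> T} \<subseteq> convex hull (A ` T)"
    using qset_sub_hull by blast
  show "convex hull (A ` T) \<subseteq> {matvec A y | y. y \<in> std_simplex \<and> supp_idx y \<subseteq> T}"
  proof (rule hull_minimal)
    show "convex {matvec A y | y. y \<in> std_simplex \<and> supp_idx y \<subseteq> T}" by (rule qset_convex)
    show "A ` T \<subseteq> {matvec A y | y. y \<in> std_simplex \<and> supp_idx y \<subseteq> T}"
    proof
      fix p assume "p \<in> A ` T"
      then obtain i where i: "i \<in> T" "p = A i" by auto
      define y where "y = (\<lambda>j. if j = i then 1 else (0::real))"
      have "y \<in> std_simplex" by (simp add: y_def std_simplex_def)
      moreover have "supp_idx y \<subseteq> T" using i by (auto simp: supp_idx_def y_def split: if_splits)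
      moreover have "matvec A y = p"
      proof -
        have eqf: "(\<lambda>j. y j *\<^sub>R A j) = (\<lambda>j. if j = i then A i else 0)" by (auto simp: y_def)
        show ?thesis using i unfolding matvec_def eqf by simp
      qed
      ultimately show "p \<in> {matvec A y | y. y \<in> std_simplex \<and> supp_idx y \<subseteq> T}" by force
    qed
  qed
qed

lemma convA_eq:
  fixes A :: "'n::finite \<Rightarrow> (real^'m) \<times> real"
  shows "convA A = convex hull (range A)"
  using qset_eq[of A UNIV] by (simp add: convA_def)



lemma K_shrink:
  fixes F :: "'a::real_vector set"
  assumes "convex F" "r \<in> F" "r + e0 *\<^sub>R (r - p) \<in> F" "0 < e" "e \<le> e0"
  shows "r + e *\<^sub>R (r - p) \<in> F"
proof -
  have "(1 - e/e0) *\<^sub>R r + (e/e0) *\<^sub>R (r + e0 *\<^sub>R (r - p)) \<in> F"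
    using assms by (intro convexD) auto
  moreover have "(1 - e/e0) *\<^sub>R r + (e/e0) *\<^sub>R (r + e0 *\<^sub>R (r - p)) = r + e *\<^sub>R (r - p)"
    using assms by (simp add: algebra_simps)
  ultimately show ?thesis by simp
qed

lemma K_seg:
  fixes F :: "'a::real_vector set"
  assumes "convex F" "b \<in> F" "p = (1 - s) *\<^sub>R a + s *\<^sub>R b" "0 < s" "s < 1" "0 < e"
    "r + e *\<^sub>R (r - p) \<in> F"
  shows "\<exists>d>0. r + d *\<^sub>R (r - a) \<in> F"
proof -
  define k where "k = 1 + s * e"
  have k: "k > 0" unfolding k_def using mult_pos_pos[OF assms(4) assms(6)] by linarith
  define d where "d = (1 - s) * e / k"
  have d: "d > 0" using assms k by (simp add: d_def)
  have "(1/k) *\<^sub>R (r + e *\<^sub>R (r - p)) + (s*e/k) *\<^sub>R b \<in> F"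
    using assms k by (intro convexD) (auto simp: k_def field_simps)
  moreover have "k *\<^sub>R (r + d *\<^sub>R (r - a)) = k *\<^sub>R ((1/k) *\<^sub>R (r + e *\<^sub>R (r - p)) + (s*e/k) *\<^sub>R b)"
  proof -
    have "k *\<^sub>R (r + d *\<^sub>R (r - a)) = k *\<^sub>R r + ((1 - s) * e) *\<^sub>R (r - a)"
    proof -
      have kd: "k * d = (1 - s) * e" using k by (simp add: d_def)
      show ?thesis by (simp add: scaleR_add_right kd)
    qed
    also have "\<dots> = (r + e *\<^sub>R (r - p)) + (s*e) *\<^sub>R b"
      unfolding assms(3) k_def by (simp add: algebra_simps)
    also have "\<dots> = k *\<^sub>R ((1/k) *\<^sub>R (r + e *\<^sub>R (r - p)) + (s*e/k) *\<^sub>R b)"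
      using k by (simp add: algebra_simps)
    finally show ?thesis .
  qed
  then have "r + d *\<^sub>R (r - a) = (1/k) *\<^sub>R (r + e *\<^sub>R (r - p)) + (s*e/k) *\<^sub>R b"
    using k by simp
  ultimately show ?thesis using d by auto
qed

lemma K_face:
  fixes F :: "'a::real_vector set"
  assumes cF: "convex F" and rF: "r \<in> F"
  shows "{p \<in> F. \<exists>e>0. r + e *\<^sub>R (r - p) \<in> F} face_of F"
  unfolding face_of_def
proof (intro conjI)
  show "{p \<in> F. \<exists>e>0. r + e *\<^sub>R (r - p) \<in> F} \<subseteq> F" by auto
  show "convex {p \<in> F. \<exists>e>0. r + e *\<^sub>R (r - p) \<in> F}"
  proof (rule convexI)
    fix p1 p2 and u w :: real
    assume p1: "p1 \<in> {p \<in> F. \<exists>e>0. r + e *\<^sub>R (r - p) \<in> F}"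
      and p2: "p2 \<in> {p \<in> F. \<exists>e>0. r + e *\<^sub>R (r - p) \<in> F}"
      and uw: "0 \<le> u" "0 \<le> w" "u + w = 1"
    obtain e1 where e1: "e1 > 0" "r + e1 *\<^sub>R (r - p1) \<in> F" using p1 by auto
    obtain e2 where e2: "e2 > 0" "r + e2 *\<^sub>R (r - p2) \<in> F" using p2 by auto
    define e where "e = min e1 e2"
    have e: "e > 0" using e1 e2 by (simp add: e_def)
    have q1: "r + e *\<^sub>R (r - p1) \<in> F" using K_shrink[OF cF rF e1(2) e] by (simp add: e_def)
    have q2: "r + e *\<^sub>R (r - p2) \<in> F" using K_shrink[OF cF rF e2(2) e] by (simp add: e_def)
    have "u *\<^sub>R (r + e *\<^sub>R (r - p1)) + w *\<^sub>R (r + e *\<^sub>R (r - p2)) \<in> F"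
      using q1 q2 uw cF by (intro convexD) auto
    moreover have "u *\<^sub>R (r + e *\<^sub>R (r - p1)) + w *\<^sub>R (r + e *\<^sub>R (r - p2))
        = r + e *\<^sub>R (r - (u *\<^sub>R p1 + w *\<^sub>R p2))"
    proof -
      have w: "w = 1 - u" using uw by simp
      show ?thesis unfolding w by (simp add: algebra_simps)
    qed
    moreover have "u *\<^sub>R p1 + w *\<^sub>R p2 \<in> F" using p1 p2 uw cF by (intro convexD) auto
    ultimately show "u *\<^sub>R p1 + w *\<^sub>R p2 \<in> {p \<in> F. \<exists>e>0. r + e *\<^sub>R (r - p) \<in> F}"
      using e by auto
  qed
  show "\<forall>a\<in>F. \<forall>b\<in>F. \<forall>x\<in>{p \<in> F. \<exists>e>0. r + e *\<^sub>R (r - p) \<in> F}.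
          x \<in> open_segment a b \<longrightarrow>
          a \<in> {p \<in> F. \<exists>e>0. r + e *\<^sub>R (r - p) \<in> F} \<and> b \<in> {p \<in> F. \<exists>e>0. r + e *\<^sub>R (r - p) \<in> F}"
  proof (intro ballI impI)
    fix a b x
    assume a: "a \<in> F" and b: "b \<in> F" and x: "x \<in> {p \<in> F. \<exists>e>0. r + e *\<^sub>R (r - p) \<in> F}"
      and seg: "x \<in> open_segment a b"
    obtain e where e: "e > 0" "r + e *\<^sub>R (r - x) \<in> F" using x by auto
    obtain s where s: "0 < s" "s < 1" "x = (1 - s) *\<^sub>R a + s *\<^sub>R b"
      using seg by (auto simp: in_segment)
    have "\<exists>d>0. r + d *\<^sub>R (r - a) \<in> F"
      by (rule K_seg[OF cF b s(3) s(1) s(2) e(1) e(2)])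
    moreover have "\<exists>d>0. r + d *\<^sub>R (r - b) \<in> F"
      by (rule K_seg[OF cF a _ _ _ e(1) e(2), of "1 - s"]) (use s in \<open>auto simp: algebra_simps\<close>)
    ultimately show "a \<in> {p \<in> F. \<exists>e>0. r + e *\<^sub>R (r - p) \<in> F} \<and> b \<in> {p \<in> F. \<exists>e>0. r + e *\<^sub>R (r - p) \<in> F}"
      using a b by auto
  qed
qed



lemma normv_nonneg: "0 \<le> normv N v w"
  by (simp add: normv_def)

lemma normv_uminus:
  assumes "is_norm_fun N"
  shows "normv N v (- w) = normv N v w"
proof -
  have "N (- fst w) = N (fst w)"
    using assms unfolding is_norm_fun_def by (metis abs_minus_cancel abs_one mult_1 scaleR_minus1_left)
  then show ?thesis by (simp add: normv_def inner_minus_right abs_minus_commute)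
qed

lemma distv_le:
  assumes "p \<in> G" "p' \<in> H"
  shows "distv N v G H \<le> normv N v (p - p')"
proof -
  have m: "normv N v (p - p') \<in> {normv N v (w - w') | w w'. w \<in> G \<and> w' \<in> H}" using assms by blast
  have b: "bdd_below {normv N v (w - w') | w w'. w \<in> G \<and> w' \<in> H}"
    unfolding bdd_below_def using normv_nonneg by blast
  show ?thesis unfolding distv_def by (rule cInf_lower[OF m b])
qed

lemma distv_nonneg:
  assumes "G \<noteq> {}" "H \<noteq> {}"
  shows "0 \<le> distv N v G H"
  unfolding distv_def
  by (rule cInf_greatest) (use assms normv_nonneg in auto)

lemma Fv_sub: "Fv A v \<subseteq> convA A"
  by (auto simp: Fv_def)

lemma admissible_nonempty:
  fixes A :: "'n::finite \<Rightarrow> (real^'m) \<times> real"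
  assumes "G face_of Fv A v" "G \<noteq> convA A"
  shows "convex hull {A i | i. A i \<notin> G} \<noteq> {}"
proof
  assume "convex hull {A i | i. A i \<notin> G} = {}"
  then have all: "range A \<subseteq> G" by auto
  have "convex G" using assms(1) face_of_imp_convex by blast
  then have "convex hull (range A) \<subseteq> G" using all hull_minimal by blast
  then have "convA A \<subseteq> G" by (simp add: convA_eq)
  moreover have "G \<subseteq> convA A" using face_of_imp_subset[OF assms(1)] Fv_sub by blast
  ultimately show False using assms(2) by blast
qed

lemma Phi_le:
  fixes A :: "'n::finite \<Rightarrow> (real^'m) \<times> real"
  assumes "G face_of Fv A v" "G \<noteq> {}" "G \<noteq> convA A"
  shows "Phi N v A \<le> distv N v G (convex hull {A i | i. A i \<notin> G})"
  unfolding Phi_def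
proof (rule cInf_lower)
  show "distv N v G (convex hull {A i |i. A i \<notin> G}) \<in> {distv N v G (convex hull {A i |i. A i \<notin> G}) |G.
          G face_of Fv A v \<and> G \<noteq> {} \<and> G \<noteq> convA A}" using assms by blast
  show "bdd_below {distv N v G (convex hull {A i |i. A i \<notin> G}) |G.
          G face_of Fv A v \<and> G \<noteq> {} \<and> G \<noteq> convA A}"
  proof (rule bdd_belowI[of _ 0])
    fix s assume "s \<in> {distv N v G (convex hull {A i |i. A i \<notin> G}) |G.
          G face_of Fv A v \<and> G \<noteq> {} \<and> G \<noteq> convA A}"
    then obtain G' where G': "s = distv N v G' (convex hull {A i |i. A i \<notin> G'})"
      "G' face_of Fv A v" "G' \<noteq> {}" "G' \<noteq> convA A" by blast
    show "0 \<le> s" unfolding G'(1)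
      by (rule distv_nonneg[OF G'(3) admissible_nonempty[OF G'(2) G'(4)]])
  qed
qed

lemma normv_scale_le:
  assumes N: "is_norm_fun N" and c: "c = normv N v w" "0 < c" and t: "c \<le> t"
  shows "normv N v (t *\<^sub>R ((1/c) *\<^sub>R w)) \<le> t"
proof -
  define a where "a = N (fst w)"
  define b where "b = \<bar>v \<bullet> fst w + snd w\<bar>"
  define k where "k = t / c"
  have a0: "a \<ge> 0" using N by (simp add: a_def is_norm_fun_def)
  have b0: "b \<ge> 0" by (simp add: b_def)
  have cc: "c\<^sup>2 = a\<^sup>2 + b" using c a0 b0 by (simp add: normv_def a_def b_def)
  have k1: "k \<ge> 1" using c t by (simp add: k_def)
  have tk: "t = k * c" using c by (simp add: k_def)
  have "normv N v (t *\<^sub>R ((1/c) *\<^sub>R w)) = normv N v (k *\<^sub>R w)"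
    by (simp add: k_def)
  also have "\<dots> = sqrt ((k * a)\<^sup>2 + k * b)"
  proof -
    have "N (k *\<^sub>R fst w) = k * a" using N k1 by (simp add: is_norm_fun_def a_def)
    moreover have "\<bar>v \<bullet> (k *\<^sub>R fst w) + k * snd w\<bar> = k * b"
      using k1 by (simp add: b_def inner_scaleR_right abs_mult distrib_left[symmetric])
    ultimately show ?thesis by (simp add: normv_def)
  qed
  also have "\<dots> \<le> sqrt (t\<^sup>2)"
  proof (rule real_sqrt_le_mono)
    have "k * b \<le> k\<^sup>2 * b" using k1 b0 by (simp add: power2_eq_square mult_right_mono)
    then show "(k * a)\<^sup>2 + k * b \<le> t\<^sup>2" unfolding tk using cc
      by (simp add: power_mult_distrib algebra_simps)
  qed
  also have "\<dots> = t" using c t by simp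
  finally show ?thesis .
qed

lemma matvec_norm_le:
  fixes A :: "'n::finite \<Rightarrow> (real^'m) \<times> real"
  assumes "y \<in> std_simplex"
  shows "norm (matvec A y) \<le> (\<Sum>i\<in>UNIV. norm (A i))"
proof -
  have y: "0 \<le> y i" "y i \<le> 1" for i
  proof -
    show "0 \<le> y i" using assms by (simp add: std_simplex_def)
    have "y i \<le> sum y UNIV" by (rule member_le_sum) (use assms in \<open>auto simp: std_simplex_def\<close>)
    then show "y i \<le> 1" using assms by (simp add: std_simplex_def)
  qed
  have "norm (matvec A y) \<le> (\<Sum>i\<in>UNIV. norm (y i *\<^sub>R A i))"
    unfolding matvec_def by (rule norm_sum)
  also have "\<dots> \<le> (\<Sum>i\<in>UNIV. norm (A i))"
  proof (rule sum_mono)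
    fix i
    have "norm (y i *\<^sub>R A i) = y i * norm (A i)" using y by simp
    also have "\<dots> \<le> 1 * norm (A i)" using y by (intro mult_right_mono) auto
    finally show "norm (y i *\<^sub>R A i) \<le> norm (A i)" by simp
  qed
  finally show ?thesis .
qed

lemma T_bdd:
  fixes A :: "'n::finite \<Rightarrow> (real^'m) \<times> real"
  assumes "d \<noteq> 0"
  shows "bdd_above {t. \<exists>y z. y \<in> std_simplex \<and> z \<in> std_simplex \<and> P y \<and>
                  matvec A y - matvec A z = t *\<^sub>R d}"
proof (rule bdd_aboveI)
  define M where "M = (\<Sum>i\<in>UNIV. norm (A i))"
  fix t assume "t \<in> {t. \<exists>y z. y \<in> std_simplex \<and> z \<in> std_simplex \<and> P y \<and>
                  matvec A y - matvec A z = t *\<^sub>R d}"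
  then obtain y z where yz: "y \<in> std_simplex" "z \<in> std_simplex" "matvec A y - matvec A z = t *\<^sub>R d"
    by blast
  have "\<bar>t\<bar> * norm d = norm (matvec A y - matvec A z)" using yz by simp
  also have "\<dots> \<le> norm (matvec A y) + norm (matvec A z)" by (rule norm_triangle_ineq4)
  also have "\<dots> \<le> 2 * M" using matvec_norm_le[OF yz(1), of A] matvec_norm_le[OF yz(2), of A]
    by (simp add: M_def)
  finally have "\<bar>t\<bar> * norm d \<le> 2 * M" .
  then have "\<bar>t\<bar> \<le> 2 * M / norm d" using assms by (simp add: field_simps)
  then show "t \<le> 2 * M / norm d" by simp
qed



lemma Fv_convex:
  fixes A :: "'n::finite \<Rightarrow> (real^'m) \<times> real"
  shows "convex (Fv A v)"
proof (rule convexI)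
  fix p1 p2 and a b :: real
  assume p: "p1 \<in> Fv A v" "p2 \<in> Fv A v" and ab: "0 \<le> a" "0 \<le> b" "a + b = 1"
  have cv: "convex (convA A)" by (simp add: convA_eq)
  have "a *\<^sub>R p1 + b *\<^sub>R p2 \<in> convA A" using p ab cv by (intro convexD) (auto simp: Fv_def)
  moreover have "v \<bullet> fst (a *\<^sub>R p1 + b *\<^sub>R p2) + snd (a *\<^sub>R p1 + b *\<^sub>R p2) \<le> v \<bullet> fst w' + snd w'"
    if "w' \<in> convA A" for w'
  proof -
    have "v \<bullet> fst (a *\<^sub>R p1 + b *\<^sub>R p2) + snd (a *\<^sub>R p1 + b *\<^sub>R p2)
        = a * (v \<bullet> fst p1 + snd p1) + b * (v \<bullet> fst p2 + snd p2)"
      by (simp add: inner_add_right algebra_simps)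
    also have "\<dots> \<le> a * (v \<bullet> fst w' + snd w') + b * (v \<bullet> fst w' + snd w')"
    proof -
      have h1: "v \<bullet> fst p1 + snd p1 \<le> v \<bullet> fst w' + snd w'" using p that by (auto simp: Fv_def)
      have h2: "v \<bullet> fst p2 + snd p2 \<le> v \<bullet> fst w' + snd w'" using p that by (auto simp: Fv_def)
      show ?thesis by (meson add_mono ab mult_left_mono h1 h2)
    qed
    also have "\<dots> = v \<bullet> fst w' + snd w'" using ab by (simp add: distrib_right[symmetric])
    finally show ?thesis .
  qed
  ultimately show "a *\<^sub>R p1 + b *\<^sub>R p2 \<in> Fv A v" by (simp add: Fv_def)
qed

lemma Fv_compact:
  fixes A :: "'n::finite \<Rightarrow> (real^'m) \<times> real"
  shows "compact (Fv A v)"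
proof -
  have eq: "Fv A v = convA A \<inter> (\<Inter>w'\<in>convA A. {p. v \<bullet> fst p + snd p \<le> v \<bullet> fst w' + snd w'})"
    by (auto simp: Fv_def)
  have "closed (\<Inter>w'\<in>convA A. {p. v \<bullet> fst p + snd p \<le> v \<bullet> fst w' + snd w'})"
    by (intro closed_INT ballI closed_Collect_le continuous_intros)
  moreover have "compact (convA A)" by (simp add: convA_eq compact_convex_hull finite_imp_compact)
  ultimately show ?thesis unfolding eq by (rule compact_Int_closed[rotated])
qed



theorem lemma1:
  fixes N :: "real^'m \<Rightarrow> real"
    and A :: "'n::finite \<Rightarrow> (real^'m) \<times> real"
    and v :: "real^'m" and u :: "(real^'m) \<times> real" and x :: "'n \<Rightarrow> real"
  assumes "is_norm_fun N"
    and "\<exists>i j. A i \<noteq> A j"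
    and "u \<in> Fv A v"
    and "x \<in> std_simplex"
    and "matvec A x \<noteq> u"
  shows "Phi N v A \<le>
           Sup {t. \<exists>y z. y \<in> std_simplex \<and> z \<in> std_simplex \<and> supp_idx y \<subseteq> supp_idx x \<and>
                  matvec A y - matvec A z =
                    t *\<^sub>R ((1 / normv N v (matvec A x - u)) *\<^sub>R (matvec A x - u))}"
proof -
  note Nn = assms(1)
  define S where "S = supp_idx x"
  define Q where "Q = convex hull (A ` S)"
  define F where "F = Fv A v"
  define w where "w = matvec A x - u"
  define c where "c = normv N v w"
  define d where "d = (1/c) *\<^sub>R w"
  define T where "T = {t. \<exists>y z. y \<in> std_simplex \<and> z \<in> std_simplex \<and> supp_idx y \<subseteq> S \<and>
                  matvec A y - matvec A z = t *\<^sub>R d}"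
  have w0: "w \<noteq> 0" using assms(5) by (simp add: w_def)
  have c0: "c > 0"
  proof (cases "fst w = 0")
    case True
    then have "snd w \<noteq> 0" using w0 by (simp add: prod_eq_iff)
    then show ?thesis using True by (simp add: c_def normv_def add_nonneg_pos)
  next
    case False
    then have "N (fst w) > 0" using Nn unfolding is_norm_fun_def
      by (metis order_le_less)
    then show ?thesis by (simp add: c_def normv_def add_pos_nonneg)
  qed
  have wcd: "w = c *\<^sub>R d" using c0 by (simp add: d_def)
  have d0: "d \<noteq> 0" using w0 wcd by auto
  have dd: "d \<bullet> d > 0" using d0 by simp
  have Fc: "compact F" "convex F" using Fv_compact Fv_convex by (auto simp: F_def)
  have uF: "u \<in> F" using assms(3) by (simp add: F_def)
  have FA: "F \<subseteq> convA A" using Fv_sub by (simp add: F_def)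
  have Qc: "compact Q" by (simp add: Q_def compact_convex_hull finite_imp_compact)
  have Qeq: "Q = {matvec A y | y. y \<in> std_simplex \<and> supp_idx y \<subseteq> S}"
    by (simp add: Q_def qset_eq)
  define C where "C = (Q \<times> F) \<inter> {z. fst z - snd z = (((fst z - snd z) \<bullet> d) / (d \<bullet> d)) *\<^sub>R d}"
  define f where "f = (\<lambda>z::((real^'m) \<times> real) \<times> ((real^'m) \<times> real). (fst z - snd z) \<bullet> d)"
  have Cc: "compact C" unfolding C_def
    by (intro compact_Int_closed compact_Times Qc Fc closed_Collect_eq continuous_intros) (use dd in auto)
  have xQ: "matvec A x \<in> Q" unfolding Qeq S_def using assms(4) by blast
  have x0C: "(matvec A x, u) \<in> C"
    using xQ uF dd by (simp add: C_def w_def[symmetric] wcd)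
  obtain z0 where z0: "z0 \<in> C" "\<forall>z\<in>C. f z \<le> f z0"
  proof -
    have fc: "continuous_on C f" unfolding f_def by (intro continuous_intros)
    have "C \<noteq> {}" using x0C by blast
    from continuous_attains_sup[OF Cc this fc] show ?thesis using that by blast
  qed
  define q where "q = fst z0"
  define r where "r = snd z0"
  define t where "t = ((q - r) \<bullet> d) / (d \<bullet> d)"
  have qQ: "q \<in> Q" and rF: "r \<in> F" and qr: "q - r = t *\<^sub>R d"
    using z0(1) by (auto simp: C_def q_def r_def t_def)
  have fz0: "f z0 = t * (d \<bullet> d)" by (simp add: f_def q_def[symmetric] r_def[symmetric] qr)
  have "f (matvec A x, u) = c * (d \<bullet> d)" by (simp add: f_def w_def[symmetric] wcd)
  then have "c * (d \<bullet> d) \<le> t * (d \<bullet> d)" using z0(2) x0C fz0 by metis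
  then have ct: "c \<le> t" using dd by simp
  obtain y where y: "y \<in> std_simplex" "supp_idx y \<subseteq> S" "matvec A y = q" using qQ Qeq by auto
  obtain z where z: "z \<in> std_simplex" "matvec A z = r" using rF FA by (auto simp: convA_def)
  have tT: "t \<in> T" unfolding T_def using y z qr by blast
  define G where "G = {p \<in> F. \<exists>e>0. r + e *\<^sub>R (r - p) \<in> F}"
  have Gface: "G face_of F" unfolding G_def by (rule K_face[OF Fc(2) rF])
  have rG: "r \<in> G" using rF by (auto simp: G_def intro: exI[of _ 1])
  have key: "A j \<notin> G" if yj: "y j > 0" for j
  proof
    assume "A j \<in> G"
    then obtain e0 where e0: "e0 > 0" "r + e0 *\<^sub>R (r - A j) \<in> F" by (auto simp: G_def)
    define e where "e = min e0 (y j)"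
    have e: "e > 0" "e \<le> e0" "e \<le> y j" using e0 yj by (auto simp: e_def)
    have rn: "r + e *\<^sub>R (r - A j) \<in> F" by (rule K_shrink[OF Fc(2) rF e0(2) e(1) e(2)])
    define yn where "yn = (\<lambda>i. (1 + e) * y i - (if i = j then e else 0))"
    have ynn: "yn \<in> std_simplex"
    proof -
      have "0 \<le> yn i" for i
      proof (cases "i = j")
        case True
        have "e \<le> (1 + e) * y i" using e y(1) True
          by (simp add: std_simplex_def algebra_simps) (meson add_increasing2 mult_nonneg_nonneg order_less_le)
        then show ?thesis using True by (simp add: yn_def)
      next
        case False
        then show ?thesis using e y(1) by (simp add: yn_def std_simplex_def)
      qed
      moreover have "sum yn UNIV = 1"
        using y(1) by (simp add: yn_def std_simplex_def sum_subtractf sum_distrib_left[symmetric])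
      ultimately show ?thesis by (simp add: std_simplex_def)
    qed
    have yns: "supp_idx yn \<subseteq> S"
    proof
      fix i assume "i \<in> supp_idx yn"
      then have "0 < (1 + e) * y i - (if i = j then e else 0)" by (simp add: supp_idx_def yn_def)
      then have "0 < y i \<or> i = j" using e by (cases "i = j") (auto simp: zero_less_mult_iff)
      then have "i \<in> supp_idx y" using yj by (auto simp: supp_idx_def)
      then show "i \<in> S" using y(2) by blast
    qed
    have mv: "matvec A yn = (1 + e) *\<^sub>R q - e *\<^sub>R A j"
    proof -
      have "matvec A yn = (\<Sum>i\<in>UNIV. (1 + e) *\<^sub>R (y i *\<^sub>R A i) - (if i = j then e *\<^sub>R A i else 0))"
        unfolding matvec_def yn_def by (intro sum.cong) (auto simp: algebra_simps)
      also have "\<dots> = (1 + e) *\<^sub>R (\<Sum>i\<in>UNIV. y i *\<^sub>R A i) - e *\<^sub>R A j"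
        by (simp only: sum_subtractf scaleR_sum_right) simp
      also have "\<dots> = (1 + e) *\<^sub>R q - e *\<^sub>R A j"
        using y(3) by (simp add: matvec_def)
      finally show ?thesis .
    qed
    define qn where "qn = matvec A yn"
    define rn' where "rn' = r + e *\<^sub>R (r - A j)"
    have qnQ: "qn \<in> Q" unfolding Qeq qn_def using ynn yns by blast
    have dif: "qn - rn' = ((1 + e) * t) *\<^sub>R d"
    proof -
      have "qn - rn' = (1 + e) *\<^sub>R (q - r)" by (simp add: qn_def rn'_def mv algebra_simps)
      then show ?thesis by (simp add: qr)
    qed
    have "(qn, rn') \<in> C" using qnQ rn dif dd by (simp add: C_def rn'_def[symmetric])
    then have "f (qn, rn') \<le> f z0" using z0(2) by blast
    moreover have "f (qn, rn') = (1 + e) * t * (d \<bullet> d)" by (simp add: f_def dif)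
    moreover have "t * (d \<bullet> d) < (1 + e) * t * (d \<bullet> d)"
      using e c0 ct dd by (simp add: algebra_simps mult_pos_pos)
    ultimately show False using fz0 by linarith
  qed
  define H where "H = convex hull {A i | i. A i \<notin> G}"
  have qH: "q \<in> H"
  proof -
    have "q \<in> convex hull (A ` supp_idx y)" using qset_sub_hull[OF y(1), of "supp_idx y" A] y(3) by simp
    moreover have "A ` supp_idx y \<subseteq> {A i | i. A i \<notin> G}" using key by (auto simp: supp_idx_def)
    ultimately show ?thesis unfolding H_def using hull_mono by blast
  qed
  obtain j where yj: "y j > 0"
  proof -
    have "sum y UNIV = 1" using y(1) by (simp add: std_simplex_def)
    then show ?thesis using that by (metis not_less sum_nonpos zero_less_one)
  qed
  have GnA: "G \<noteq> convA A"
  proof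
    assume "G = convA A"
    moreover have "A j \<in> convA A" by (simp add: convA_eq hull_inc)
    ultimately show False using key[OF yj] by simp
  qed
  have "Phi N v A \<le> distv N v G H"
    unfolding H_def by (rule Phi_le[OF Gface[unfolded F_def] _ GnA]) (use rG in auto)
  also have "\<dots> \<le> normv N v (r - q)" by (rule distv_le[OF rG qH])
  also have "\<dots> = normv N v (q - r)" using normv_uminus[OF Nn, of v "q - r"] by simp
  also have "\<dots> = normv N v (t *\<^sub>R ((1/c) *\<^sub>R w))" by (simp add: qr d_def)
  also have "\<dots> \<le> t" by (rule normv_scale_le[OF Nn c_def c0 ct])
  also have "\<dots> \<le> Sup T" by (rule cSup_upper[OF tT]) (unfold T_def, rule T_bdd[OF d0])
  finally show ?thesis by (simp add: T_def S_def d_def c_def w_def)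
qed


end
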